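(* Let $1\le t_1<t_2$ and $n\ge t_1+t_2$ be integers, let $G=G_n\langle t_1,t_2\rangle$ and $d=\gcd(t_1,t_2)$. Then the following are equivalent: (i) $(t_1+t_2)/d$ is even or $(t_1+t_2)/d=3$; (ii) $G$ contains no odd hole; (iii) $G$ is perfect; (iv) $G$ is weakly perfect.
   Context: For integers $n\ge 2$, $k\ge 1$ and $1\le t_1<t_2<\cdots<t_k\le n-1$, the Toeplitz graph $G_n\langle t_1,\ldots,t_k\rangle$ is the simple graph with vertex set $[n]=\{1,\ldots,n\}$ in which two distinct vertices $i,j$ are adjacent if and only if $|i-j|\in\{t_1,\ldots,t_k\}$. A hole is an induced (chordless) cycle of length at least $4$; an odd hole is a hole with an odd number of vertices. A graph $G$ is perfect if $\omega(H)=\chi(H)$ for every induced subgraph $H$ of $G$, and weakly perfect if $\omega(G)=\chi(G)$, where $\omega$ is the clique number and $\chi$ the chromatic number. *)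

theory Defs
  imports Main
begin

text \<open>Simple graphs are given by a vertex set V and a symmetric irreflexive
adjacency predicate E (only its restriction to V matters).\<close>

definition toeplitz_adj :: "nat \<Rightarrow> nat set \<Rightarrow> nat \<Rightarrow> nat \<Rightarrow> bool" where
  "toeplitz_adj n T i j \<longleftrightarrow>
     i \<in> {1..n} \<and> j \<in> {1..n} \<and> i \<noteq> j \<and> nat \<bar>int i - int j\<bar> \<in> T"

definition toeplitz_vertices :: "nat \<Rightarrow> nat set" where
  "toeplitz_vertices n = {1..n}"

definition is_clique :: "'a set \<Rightarrow> ('a \<Rightarrow> 'a \<Rightarrow> bool) \<Rightarrow> 'a set \<Rightarrow> bool" where
  "is_clique V E K \<longleftrightarrow> K \<subseteq> V \<and> (\<forall>x\<in>K. \<forall>y\<in>K. x \<noteq> y \<longrightarrow> E x y)"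

definition clique_number :: "'a set \<Rightarrow> ('a \<Rightarrow> 'a \<Rightarrow> bool) \<Rightarrow> nat" where
  "clique_number V E = Max {card K | K. is_clique V E K}"

definition proper_colouring :: "'a set \<Rightarrow> ('a \<Rightarrow> 'a \<Rightarrow> bool) \<Rightarrow> nat \<Rightarrow> ('a \<Rightarrow> nat) \<Rightarrow> bool" where
  "proper_colouring V E k f \<longleftrightarrow>
     (\<forall>x\<in>V. f x < k) \<and> (\<forall>x\<in>V. \<forall>y\<in>V. E x y \<longrightarrow> f x \<noteq> f y)"

definition chromatic_number :: "'a set \<Rightarrow> ('a \<Rightarrow> 'a \<Rightarrow> bool) \<Rightarrow> nat" where
  "chromatic_number V E = (LEAST k. \<exists>f. proper_colouring V E k f)"

definition is_hole :: "'a set \<Rightarrow> ('a \<Rightarrow> 'a \<Rightarrow> bool) \<Rightarrow> 'a list \<Rightarrow> bool" where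
  "is_hole V E vs \<longleftrightarrow> length vs \<ge> 4 \<and> distinct vs \<and> set vs \<subseteq> V \<and>
     (\<forall>i<length vs. \<forall>j<length vs.
        E (vs ! i) (vs ! j) \<longleftrightarrow> (j = Suc i mod length vs \<or> i = Suc j mod length vs))"

definition has_odd_hole :: "'a set \<Rightarrow> ('a \<Rightarrow> 'a \<Rightarrow> bool) \<Rightarrow> bool" where
  "has_odd_hole V E \<longleftrightarrow> (\<exists>vs. is_hole V E vs \<and> odd (length vs))"

definition perfect :: "'a set \<Rightarrow> ('a \<Rightarrow> 'a \<Rightarrow> bool) \<Rightarrow> bool" where
  "perfect V E \<longleftrightarrow> (\<forall>H\<subseteq>V. clique_number H E = chromatic_number H E)"

definition weakly_perfect :: "'a set \<Rightarrow> ('a \<Rightarrow> 'a \<Rightarrow> bool) \<Rightarrow> bool" where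
  "weakly_perfect V E \<longleftrightarrow> clique_number V E = chromatic_number V E"

end

theory Submission
  imports Defs "HOL-Number_Theory.Cong"
begin

lemma adj_iff:
  assumes "1 \<le> t1"
  shows "toeplitz_adj n {t1, t2} x y \<longleftrightarrow> x \<in> {1..n} \<and> y \<in> {1..n} \<and> x \<noteq> y \<and>
     (x + t1 = y \<or> y + t1 = x \<or> x + t2 = y \<or> y + t2 = x)"
  using assms unfolding toeplitz_adj_def by (auto simp: nat_abs_int_diff split: if_splits)

lemma adj_irrefl: "\<not> toeplitz_adj n T x x"
  unfolding toeplitz_adj_def by auto

lemma adj_sym: "toeplitz_adj n T x y = toeplitz_adj n T y x"
  unfolding toeplitz_adj_def by (auto simp: abs_minus_commute)

lemma cards_finite:
  assumes "finite H"
  shows "finite {card K | K. is_clique H E K}"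
proof -
  have "{card K | K. is_clique H E K} \<subseteq> {..card H}"
    using assms by (auto simp: is_clique_def intro: card_mono)
  then show ?thesis by (rule finite_subset) auto
qed

lemma clique_le:
  assumes "finite H" "is_clique H E K"
  shows "card K \<le> clique_number H E"
  unfolding clique_number_def using cards_finite[OF assms(1)] assms(2)
  by (intro Max_ge) auto

lemma chi_le:
  assumes "proper_colouring H E k f"
  shows "chromatic_number H E \<le> k"
  unfolding chromatic_number_def using assms by (intro Least_le) auto

lemma colour_exists:
  fixes H :: "nat set" 
  assumes "finite H" "\<forall>x. \<not> E x x"
  shows "\<exists>k f. proper_colouring H E k f"
proof -
  obtain k where "\<forall>x\<in>H. x < k" using assms(1) finite_nat_set_iff_bounded by blast
  then have "proper_colouring H E k id" using assms(2) unfolding proper_colouring_def by auto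
  then show ?thesis by blast
qed

lemma chi_colouring:
  fixes H :: "nat set" 
  assumes "finite H" "\<forall>x. \<not> E x x"
  shows "proper_colouring H E (chromatic_number H E) (SOME f. proper_colouring H E (chromatic_number H E) f)"
proof -
  have "\<exists>f. proper_colouring H E (chromatic_number H E) f"
    unfolding chromatic_number_def using colour_exists[of H E, OF assms] by (rule LeastI_ex)
  then show ?thesis by (rule someI_ex)
qed

lemma omega_le_chi:
  fixes H :: "nat set" 
  assumes "finite H" "\<forall>x. \<not> E x x"
  shows "clique_number H E \<le> chromatic_number H E"
proof -
  define k where "k = chromatic_number H E"
  define f where "f = (SOME f. proper_colouring H E k f)"
  have pc: "proper_colouring H E k f" using chi_colouring[of H E, OF assms] unfolding k_def f_def by simp
  have "card K \<le> k" if "is_clique H E K" for K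
  proof -
    have inj: "inj_on f K" using that pc unfolding is_clique_def proper_colouring_def inj_on_def
      by blast
    have "f ` K \<subseteq> {..<k}" using that pc unfolding is_clique_def proper_colouring_def by auto
    then have "card (f ` K) \<le> k" by (metis card_lessThan card_mono finite_lessThan)
    then show ?thesis using card_image[OF inj] by simp
  qed
  then show ?thesis unfolding clique_number_def k_def
    using cards_finite[OF assms(1), of E]
    by (intro Max.boundedI) (auto simp: is_clique_def)
qed

lemma eq_from:
  fixes H :: "nat set" 
  assumes "finite H" "\<forall>x. \<not> E x x" "proper_colouring H E k f" "is_clique H E K" "card K = k"
  shows "clique_number H E = chromatic_number H E"
  using omega_le_chi[of H E, OF assms(1,2)] chi_le[OF assms(3)] clique_le[OF assms(1,4)] assms(5)
  by linarith

lemma small_case: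
  fixes H :: "nat set"
  assumes "\<forall>x\<in>H. \<forall>y\<in>H. \<not> E x y"
  shows "\<exists>k f K. proper_colouring H E k f \<and> is_clique H E K \<and> card K = k"
proof (cases "H = {}")
  case True
  then show ?thesis unfolding proper_colouring_def is_clique_def
    by (intro exI[of _ 0] exI[of _ "\<lambda>x. 0"] exI[of _ "{}"]) auto
next
  case False
  then obtain x where "x \<in> H" by blast
  then show ?thesis using assms unfolding proper_colouring_def is_clique_def
    by (intro exI[of _ 1] exI[of _ "\<lambda>x. 0"] exI[of _ "{x}"]) auto
qed

lemma perfect_by:
  fixes V :: "nat set"
  assumes "finite V" "\<forall>x. \<not> E x x"
    "\<And>H. H \<subseteq> V \<Longrightarrow> \<exists>k f K. proper_colouring H E k f \<and> is_clique H E K \<and> card K = k"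
  shows "perfect V E"
  unfolding perfect_def
proof (intro allI impI)
  fix H assume "H \<subseteq> V"
  then have "finite H" using assms(1) finite_subset by blast
  then show "clique_number H E = chromatic_number H E"
    using assms(3)[OF \<open>H \<subseteq> V\<close>] eq_from[of H E, OF _ assms(2)] by blast
qed

lemma colouring_mono:
  "H \<subseteq> V \<Longrightarrow> proper_colouring V E k f \<Longrightarrow> proper_colouring H E k f"
  unfolding proper_colouring_def by blast

lemma odd_hole_no_2col:
  assumes "is_hole V E vs" "odd (length vs)" "proper_colouring V E 2 f"
  shows False
proof -
  define m where "m = length vs"
  have m4: "m \<ge> 4" and sub: "set vs \<subseteq> V" and adj: "\<And>i j. i < m \<Longrightarrow> j < m \<Longrightarrow>
        E (vs ! i) (vs ! j) \<longleftrightarrow> (j = Suc i mod m \<or> i = Suc j mod m)"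
    using assms(1) unfolding is_hole_def m_def by auto
  have lt2: "\<And>i. i < m \<Longrightarrow> f (vs ! i) < 2" using assms(3) sub unfolding proper_colouring_def m_def
    by (meson nth_mem subsetD)
  have step: "f (vs ! Suc i) = 1 - f (vs ! i)" if "Suc i < m" for i
  proof -
    have "E (vs ! i) (vs ! Suc i)" using adj[of i "Suc i"] that by simp
    then have "f (vs ! i) \<noteq> f (vs ! Suc i)" using assms(3) sub that unfolding proper_colouring_def m_def
      by (meson Suc_lessD nth_mem subsetD)
    then show ?thesis using lt2[of i] lt2[of "Suc i"] that by auto
  qed
  have all: "i < m \<Longrightarrow> f (vs ! i) = (f (vs ! 0) + i) mod 2" for i
  proof (induction i)
    case 0 then show ?case using lt2[of 0] by simp
  next
    case (Suc i)
    then show ?case using step[of i] lt2[of i] by (auto simp: mod_Suc)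
  qed
  have "E (vs ! (m - 1)) (vs ! 0)" using adj[of "m - 1" 0] m4 by simp
  then have "f (vs ! (m - 1)) \<noteq> f (vs ! 0)" using assms(3) sub m4 unfolding proper_colouring_def m_def
    by (metis diff_less nth_mem subsetD zero_less_numeral less_le_trans zero_less_one)
  moreover have "f (vs ! (m - 1)) = f (vs ! 0)"
  proof -
    obtain q where q: "m = Suc (2*q)" using assms(2) unfolding m_def[symmetric] by (metis oddE Suc_eq_plus1)
    show ?thesis using all[of "m - 1"] q lt2[of 0] by auto
  qed
  ultimately show False by simp
qed

lemma m2: "odd (a::nat) \<Longrightarrow> k mod 2 \<noteq> (a + k) mod 2" by presburger

lemma bip_col:
  assumes "d > 0" "odd a" "odd b"
  shows "proper_colouring {1..n} (toeplitz_adj n {d*a, d*b}) 2 (\<lambda>x. (x div d) mod 2)"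
proof -
  have "1 \<le> d*a" using assms by (metis odd_pos less_one mult_is_0 not_le One_nat_def Suc_leI nat_0_less_mult_iff)
  then show ?thesis
    unfolding proper_colouring_def adj_iff[OF \<open>1 \<le> d*a\<close>]
    using assms by (auto simp: mult.commute[of d]) (metis m2)+
qed

lemma m3a: "(k::nat) mod 3 \<noteq> Suc k mod 3" by presburger
lemma m3b: "(k::nat) mod 3 \<noteq> Suc (Suc k) mod 3" by presburger

lemma col3:
  assumes "d > 0"
  shows "proper_colouring {1..n} (toeplitz_adj n {d, d*2}) 3 (\<lambda>x. (x div d) mod 3)"
proof -
  have "1 \<le> d" using assms by simp
  then show ?thesis
    unfolding proper_colouring_def adj_iff[OF \<open>1 \<le> d\<close>]
    using assms m3a m3b by (auto simp: mult.commute[of d] div_add_self2) (metis m3a m3b)+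
qed

function gcol :: "nat set \<Rightarrow> nat \<Rightarrow> nat \<Rightarrow> nat" where
  "gcol H d x = (if 0 < d \<and> d \<le> x \<and> x - d \<in> H then 1 - gcol H d (x - d)
     else if 0 < d \<and> 2*d \<le> x \<and> x - 2*d \<in> H then 1 - gcol H d (x - 2*d) else 0)"
  by auto
termination by (relation "measure (\<lambda>(H,d,x). x)") auto

declare gcol.simps[simp del]

lemma gcol_le: "gcol H d x \<le> 1"
  by (subst gcol.simps) auto

lemma greedy:
  assumes "d > 0" "H \<subseteq> {1..n}"
    and tf: "\<not> (\<exists>x\<in>H. \<exists>y\<in>H. \<exists>z\<in>H. toeplitz_adj n {d, d*2} x y \<and> toeplitz_adj n {d, d*2} y z
                \<and> toeplitz_adj n {d, d*2} x z)"
  shows "proper_colouring H (toeplitz_adj n {d, d*2}) 2 (gcol H d)"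
proof -
  let ?E = "toeplitz_adj n {d, d*2}"
  have d1: "1 \<le> d" using assms by simp
  have key: "gcol H d y \<noteq> gcol H d x" if "x \<in> H" "y \<in> H" "?E x y" "x < y" for x y
  proof -
    have yx: "y = x + d \<or> y = x + 2*d" using that adj_iff[OF d1] by auto
    show ?thesis
    proof (cases "y = x + d")
      case True
      then have "gcol H d y = 1 - gcol H d x" using that assms(1) by (subst gcol.simps) auto
      then show ?thesis using gcol_le[of H d x] by presburger
    next
      case False
      then have y: "y = x + 2*d" using yx by auto
      have "x + d \<notin> H"
      proof
        assume "x + d \<in> H"
        then have "?E x (x+d) \<and> ?E (x+d) y" using that y assms(2) adj_iff[OF d1] by auto
        then show False using tf that \<open>x + d \<in> H\<close> by blast
      qed
      then have "gcol H d y = 1 - gcol H d x" using that assms(1) y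
        by (subst gcol.simps) (auto simp: add.commute[of x] add.assoc)
      then show ?thesis using gcol_le[of H d x] by presburger
    qed
  qed
  show ?thesis unfolding proper_colouring_def
  proof (intro conjI ballI impI)
    fix x assume "x \<in> H" then show "gcol H d x < 2" using gcol_le[of H d x] by auto
  next
    fix x y assume xy: "x \<in> H" "y \<in> H" "?E x y"
    then have "x \<noteq> y" using adj_irrefl by metis
    then show "gcol H d x \<noteq> gcol H d y"
    proof (cases "x < y")
      case True then show ?thesis using key xy by metis
    next
      case False then have "y < x" using \<open>x \<noteq> y\<close> by simp
      then show ?thesis using key[of y x] xy adj_sym by metis
    qed
  qed
qed

lemma clique2: "x \<in> H \<Longrightarrow> y \<in> H \<Longrightarrow> E x y \<Longrightarrow> E y x \<Longrightarrow> is_clique H E {x, y}"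
  unfolding is_clique_def by blast

lemma clique3: "x \<in> H \<Longrightarrow> y \<in> H \<Longrightarrow> z \<in> H \<Longrightarrow> E x y \<Longrightarrow> E y x \<Longrightarrow> E y z \<Longrightarrow> E z y
   \<Longrightarrow> E x z \<Longrightarrow> E z x \<Longrightarrow> is_clique H E {x, y, z}"
  unfolding is_clique_def by blast

lemma perfect_bip:
  assumes "d > 0" "odd a" "odd b"
  shows "perfect {1..n} (toeplitz_adj n {d*a, d*b})"
proof (rule perfect_by)
  let ?E = "toeplitz_adj n {d*a, d*b}"
  show "\<forall>x. \<not> ?E x x" using adj_irrefl by metis
  fix H assume H: "H \<subseteq> {1..n}"
  show "\<exists>k f K. proper_colouring H ?E k f \<and> is_clique H ?E K \<and> card K = k"
  proof (cases "\<exists>x\<in>H. \<exists>y\<in>H. ?E x y")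
    case True
    then obtain x y where xy: "x \<in> H" "y \<in> H" "?E x y" by blast
    then have "x \<noteq> y" using adj_irrefl by metis
    have "is_clique H ?E {x, y}" using xy adj_sym[of n _ x y] clique2[of x H y ?E] by blast
    moreover have "card {x, y} = 2" using \<open>x \<noteq> y\<close> by simp
    moreover have "proper_colouring H ?E 2 (\<lambda>x. (x div d) mod 2)"
      using colouring_mono[OF H bip_col[OF assms]] .
    ultimately show ?thesis by blast
  next
    case False then show ?thesis using small_case[of H ?E] by blast
  qed
qed simp

lemma perfect_12:
  assumes "d > 0"
  shows "perfect {1..n} (toeplitz_adj n {d, d*2})"
proof (rule perfect_by)
  let ?E = "toeplitz_adj n {d, d*2}"
  show "\<forall>x. \<not> ?E x x" using adj_irrefl by metis
  fix H assume H: "H \<subseteq> {1..n}"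
  show "\<exists>k f K. proper_colouring H ?E k f \<and> is_clique H ?E K \<and> card K = k"
  proof (cases "\<exists>x\<in>H. \<exists>y\<in>H. \<exists>z\<in>H. ?E x y \<and> ?E y z \<and> ?E x z")
    case True
    then obtain x y z where xy: "x \<in> H" "y \<in> H" "z \<in> H" "?E x y" "?E y z" "?E x z" by blast
    then have "x \<noteq> y" "y \<noteq> z" "x \<noteq> z" using adj_irrefl[of n _ x] adj_irrefl[of n _ y] by metis+
    have "is_clique H ?E {x, y, z}" using xy adj_sym[of n _ x y] adj_sym[of n _ y z] adj_sym[of n _ x z] clique3[of x H y z ?E] by blast
    moreover have "card {x, y, z} = 3" using \<open>x \<noteq> y\<close> \<open>y \<noteq> z\<close> \<open>x \<noteq> z\<close> by simp
    moreover have "proper_colouring H ?E 3 (\<lambda>x. (x div d) mod 3)"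
      using colouring_mono[OF H col3[OF assms]] .
    ultimately show ?thesis by blast
  next
    case tf: False
    show ?thesis
    proof (cases "\<exists>x\<in>H. \<exists>y\<in>H. ?E x y")
      case True
      then obtain x y where xy: "x \<in> H" "y \<in> H" "?E x y" by blast
      then have "x \<noteq> y" using adj_irrefl by metis
      have "is_clique H ?E {x, y}" using xy adj_sym[of n _ x y] clique2[of x H y ?E] by blast
      moreover have "card {x, y} = 2" using \<open>x \<noteq> y\<close> by simp
      moreover have "proper_colouring H ?E 2 (gcol H d)"
        using greedy[OF assms H tf] .
      ultimately show ?thesis by blast
    next
      case False then show ?thesis using small_case[of H ?E] by blast
    qed
  qed
qed simp

lemma idx_lemma:
  assumes "m \<ge> 4" "k < m"
  shows "\<exists>i1 i2. i1 < m \<and> i2 < m \<and> i1 = Suc k mod m \<and> k = Suc i2 mod m \<and> i1 \<noteq> i2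
     \<and> \<not> (i2 = Suc i1 mod m \<or> i1 = Suc i2 mod m)"
proof (cases "k = 0")
  case True
  then show ?thesis using assms by (intro exI[of _ 1] exI[of _ "m - 1"]) auto
next
  case k0: False
  show ?thesis
  proof (cases "k = m - 1")
    case True
    then show ?thesis using assms by (intro exI[of _ 0] exI[of _ "m - 2"]) auto
  next
    case False
    then show ?thesis using assms k0
      by (intro exI[of _ "Suc k"] exI[of _ "k - 1"]) (auto simp: mod_Suc)
  qed
qed

lemma no_hole_12:
  assumes "d > 0"
  shows "\<not> is_hole V (toeplitz_adj n {d, d*2}) vs"
proof
  let ?E = "toeplitz_adj n {d, d*2}"
  have d1: "1 \<le> d" using assms by simp
  assume h: "is_hole V ?E vs"
  define m where "m = length vs"
  have m4: "m \<ge> 4" and dist: "distinct vs" and adj: "\<And>i j. i < m \<Longrightarrow> j < m \<Longrightarrow>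
        ?E (vs ! i) (vs ! j) \<longleftrightarrow> (j = Suc i mod m \<or> i = Suc j mod m)"
    using h unfolding is_hole_def m_def by auto
  define v where "v = Min (set vs)"
  have "vs \<noteq> []" using m4 m_def by auto
  then have "v \<in> set vs" unfolding v_def by simp
  then obtain k where k: "k < m" "vs ! k = v" unfolding m_def by (metis in_set_conv_nth)
  obtain i1 i2 where i: "i1 < m" "i2 < m" "i1 = Suc k mod m" "k = Suc i2 mod m" "i1 \<noteq> i2"
     "\<not> (i2 = Suc i1 mod m \<or> i1 = Suc i2 mod m)"
    using idx_lemma[OF m4 k(1)] by blast
  have e1: "?E v (vs ! i1)" using adj[OF k(1) i(1)] i k by simp
  have e2: "?E v (vs ! i2)" using adj[OF k(1) i(2)] i k by simp
  have ne: "\<not> ?E (vs ! i1) (vs ! i2)" using adj[OF i(1) i(2)] i by simp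
  have neq: "vs ! i1 \<noteq> vs ! i2" using dist i unfolding m_def by (simp add: nth_eq_iff_index_eq)
  have g1: "v \<le> vs ! i1" "v \<le> vs ! i2" unfolding v_def using i(1,2) unfolding m_def by auto
  define u where "u = vs ! i1"
  define w where "w = vs ! i2"
  have uu: "u = v + d \<or> u = v + 2*d" "u \<in> {1..n}" using e1 g1 unfolding adj_iff[OF d1] u_def by auto
  have ww: "w = v + d \<or> w = v + 2*d" "w \<in> {1..n}" using e2 g1 unfolding adj_iff[OF d1] w_def by auto
  have "u + d = w \<or> w + d = u" using uu(1) ww(1) neq unfolding u_def[symmetric] w_def[symmetric] by auto
  then have "?E u w" using uu(2) ww(2) neq d1 unfolding adj_iff[OF d1] u_def[symmetric] w_def[symmetric] by auto
  then show False using ne unfolding u_def w_def by simp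
qed

lemma L_key:
  fixes a s i j :: nat
  assumes "coprime a s" "i < s" "j < s"
  shows "j * a mod s = (i * a mod s + a) mod s \<longleftrightarrow> j = Suc i mod s"
proof -
  have "(i * a mod s + a) mod s = (Suc i * a) mod s" by (simp add: mod_add_right_eq add.commute)
  then have "j * a mod s = (i * a mod s + a) mod s \<longleftrightarrow> [j * a = Suc i * a] (mod s)"
    by (simp add: cong_def)
  also have "\<dots> \<longleftrightarrow> [j = Suc i] (mod s)" using cong_mult_rcancel_nat[OF assms(1)] .
  also have "\<dots> \<longleftrightarrow> j = Suc i mod s" using assms(3) by (simp add: cong_def)
  finally show ?thesis .
qed

lemma M_key:
  fixes a b p q :: nat
  assumes "p < a + b" "q < a + b" "0 < a" "0 < b"
  shows "q = (p + a) mod (a + b) \<longleftrightarrow> (p + a = q \<or> q + b = p)"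
proof (cases "p + a < a + b")
  case True
  then show ?thesis using assms by auto
next
  case False
  then have "(p + a) mod (a + b) = p + a - (a + b)" using assms
    by (simp add: le_mod_geq)
  then show ?thesis using assms False by auto
qed

lemma hole_exists:
  fixes a b d n :: nat
  assumes "d > 0" "coprime a b" "1 \<le> a" "a < b" "odd (a + b)" "a + b \<noteq> 3" "d * (a + b) \<le> n"
  shows "has_odd_hole {1..n} (toeplitz_adj n {d*a, d*b})"
proof -
  define s where "s = a + b"
  let ?E = "toeplitz_adj n {d*a, d*b}"
  have cs: "coprime a s" using assms(2) unfolding s_def
    by (simp add: coprime_iff_gcd_eq_1 gcd.commute[of a] add.commute[of a])
  have s5: "s \<ge> 5" using assms(3-6) unfolding s_def by presburger
  define p where "p i = i * a mod s" for i
  define vs where "vs = map (\<lambda>i. d * p i + 1) [0..<s]"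
  have len: "length vs = s" unfolding vs_def by simp
  have nth: "i < s \<Longrightarrow> vs ! i = d * p i + 1" for i unfolding vs_def by simp
  have ps: "p i < s" for i unfolding p_def using s5 by simp
  have pinj: "i < s \<Longrightarrow> j < s \<Longrightarrow> p i = p j \<Longrightarrow> i = j" for i j
  proof -
    assume "i < s" "j < s" "p i = p j"
    then have "[i * a = j * a] (mod s)" unfolding p_def cong_def by simp
    then have "[i = j] (mod s)" using cong_mult_rcancel_nat[OF cs] by simp
    then show "i = j" using \<open>i < s\<close> \<open>j < s\<close> by (simp add: cong_def)
  qed
  have dist: "distinct vs" unfolding vs_def distinct_map
    using pinj assms(1) by (auto simp: inj_on_def)
  have d1: "1 \<le> d * a" using assms(1,3) by simp
  have sub: "set vs \<subseteq> {1..n}"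
  proof
    fix x assume "x \<in> set vs"
    then obtain i where i: "i < s" "x = d * p i + 1" unfolding vs_def by auto
    have "d * p i + 1 \<le> d * (s - 1) + 1" using ps[of i] by (intro add_right_mono mult_left_mono) auto
    also have "\<dots> \<le> d * (s - 1) + d" using assms(1) by simp
    also have "\<dots> = d * s" using s5 by (cases s) auto
    finally show "x \<in> {1..n}" using i assms(7) unfolding s_def by auto
  qed
  have adj: "?E (vs ! i) (vs ! j) \<longleftrightarrow> (j = Suc i mod s \<or> i = Suc j mod s)" if ij: "i < s" "j < s" for i j
  proof -
    have inV: "vs ! i \<in> {1..n}" "vs ! j \<in> {1..n}" 
      using subsetD[OF sub nth_mem[of i vs]] subsetD[OF sub nth_mem[of j vs]] ij len by simp_all
    have "?E (vs ! i) (vs ! j) \<longleftrightarrow> (p i + a = p j \<or> p j + a = p i \<or> p i + b = p j \<or> p j + b = p i)"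
      unfolding adj_iff[OF d1] nth[OF ij(1)] nth[OF ij(2)] using inV nth ij assms(1,3,4)
      by (auto simp: add_mult_distrib2[symmetric])
    also have "\<dots> \<longleftrightarrow> p j = (p i + a) mod s \<or> p i = (p j + a) mod s"
      using M_key[of "p i" a b "p j"] M_key[of "p j" a b "p i"] ps assms(3,4) unfolding s_def by auto
    also have "\<dots> \<longleftrightarrow> (j = Suc i mod s \<or> i = Suc j mod s)"
      using L_key[OF cs ij] L_key[OF cs ij(2,1)] unfolding p_def by simp
    finally show ?thesis .
  qed
  have "is_hole {1..n} ?E vs" unfolding is_hole_def len
  proof (intro conjI allI impI)
    show "4 \<le> s" using s5 by simp
  next
    fix i j assume "i < s" "j < s"
    then show "?E (vs ! i) (vs ! j) \<longleftrightarrow> (j = Suc i mod s \<or> i = Suc j mod s)" by (rule adj)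
  qed (use dist sub in simp_all)
  moreover have "odd (length vs)" using len assms(5) s_def by simp
  ultimately show ?thesis unfolding has_odd_hole_def by blast
qed

lemma three_elems:
  assumes "finite K" "3 \<le> card K"
  shows "\<exists>x y z. x \<in> K \<and> y \<in> K \<and> z \<in> K \<and> x \<noteq> y \<and> y \<noteq> z \<and> x \<noteq> z"
proof -
  obtain x where x: "x \<in> K" using assms by fastforce
  have "card (K - {x}) \<ge> 2" using assms x by simp
  then have "K - {x} \<noteq> {}" by (metis card.empty not_numeral_le_zero)
  then obtain y where y: "y \<in> K - {x}" by blast
  have "card (K - {x} - {y}) \<ge> 1" using assms x y by (simp add: card_Diff_singleton_if)
  then have "K - {x} - {y} \<noteq> {}" by (metis card.empty not_one_le_zero)
  then obtain z where z: "z \<in> K - {x} - {y}" by blast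
  show ?thesis using x y z by blast
qed

lemma tri_arith:
  fixes x y z t1 t2 :: nat
  assumes "1 \<le> t1" "t1 < t2" "x \<noteq> y" "y \<noteq> z" "x \<noteq> z"
    "x + t1 = y \<or> y + t1 = x \<or> x + t2 = y \<or> y + t2 = x"
    "y + t1 = z \<or> z + t1 = y \<or> y + t2 = z \<or> z + t2 = y"
    "x + t1 = z \<or> z + t1 = x \<or> x + t2 = z \<or> z + t2 = x"
  shows "t2 = 2 * t1"
  using assms by auto

lemma omega_le2:
  assumes "1 \<le> t1" "t1 < t2" "t2 \<noteq> 2 * t1"
  shows "clique_number {1..n} (toeplitz_adj n {t1, t2}) \<le> 2"
proof -
  let ?E = "toeplitz_adj n {t1, t2}"
  have "card K \<le> 2" if K: "is_clique {1..n} ?E K" for K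
  proof (rule ccontr)
    assume "\<not> card K \<le> 2"
    moreover have "finite K" using K unfolding is_clique_def using finite_subset by blast
    ultimately obtain x y z where xyz: "x \<in> K" "y \<in> K" "z \<in> K" "x \<noteq> y" "y \<noteq> z" "x \<noteq> z"
      using three_elems[of K] by fastforce
    have "?E x y" "?E y z" "?E x z" using K xyz unfolding is_clique_def by blast+
    then have "t2 = 2 * t1" using tri_arith[OF assms(1,2) xyz(4-6)] unfolding adj_iff[OF assms(1)] by blast
    then show False using assms(3) by simp
  qed
  then show ?thesis unfolding clique_number_def
    using cards_finite[of "{1..n}" ?E]
    by (intro Max.boundedI) (auto simp: is_clique_def)
qed

lemma chi_ge3:
  fixes V :: "nat set"
  assumes "finite V" "\<forall>x. \<not> E x x" "has_odd_hole V E"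
  shows "3 \<le> chromatic_number V E"
proof (rule ccontr)
  assume "\<not> 3 \<le> chromatic_number V E"
  then have le: "chromatic_number V E \<le> 2" by simp
  let ?f = "SOME f. proper_colouring V E (chromatic_number V E) f"
  have "proper_colouring V E (chromatic_number V E) ?f" using chi_colouring[of V E, OF assms(1,2)] .
  then have "proper_colouring V E 2 ?f" using le unfolding proper_colouring_def by fastforce
  then show False using assms(3) odd_hole_no_2col unfolding has_odd_hole_def by blast
qed

theorem theorem3p7:
  fixes t1 t2 n :: nat
  assumes "1 \<le> t1" and "t1 < t2" and "t1 + t2 \<le> n"
  defines "d \<equiv> gcd t1 t2"
  defines "V \<equiv> toeplitz_vertices n"
  defines "E \<equiv> toeplitz_adj n {t1, t2}"
  shows "((even ((t1 + t2) div d) \<or> (t1 + t2) div d = 3) \<longleftrightarrow> \<not> has_odd_hole V E)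
       \<and> (\<not> has_odd_hole V E \<longleftrightarrow> perfect V E)
       \<and> (perfect V E \<longleftrightarrow> weakly_perfect V E)"
proof -
  have d0: "d > 0" unfolding d_def using assms(1) by simp
  define a where "a = t1 div d"
  define b where "b = t2 div d"
  have t1: "t1 = d * a" unfolding a_def d_def by simp
  have t2: "t2 = d * b" unfolding b_def d_def by simp
  have cop: "coprime a b" unfolding a_def b_def d_def using assms(1) div_gcd_coprime[of t1 t2] by simp
  have a1: "1 \<le> a" using assms(1) t1 by (cases a) auto
  have ab: "a < b" using assms(2) t1 t2 d0 by simp
  have sdiv: "(t1 + t2) div d = a + b" using t1 t2 d0 by (simp add: add_mult_distrib2[symmetric])
  have VV: "V = {1..n}" unfolding V_def toeplitz_vertices_def by simp
  have EE: "E = toeplitz_adj n {d*a, d*b}" unfolding E_def t1[symmetric] t2[symmetric] ..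
  have irr: "\<forall>x. \<not> E x x" unfolding E_def using adj_irrefl by metis
  let ?P = "even (a + b) \<or> a + b = 3"
  have odds: "odd a \<and> odd b" if "even (a + b)"
  proof -
    have "odd a"
    proof
      assume "even a"
      then have "even b" using that by simp
      then have "2 dvd gcd a b" using \<open>even a\<close> by simp
      then show False using cop by simp
    qed
    then show ?thesis using that by simp
  qed
  have ab12: "a = 1 \<and> b = 2" if "a + b = 3" using that a1 ab by auto
  have A: "\<not> has_odd_hole V E" if ?P
  proof (cases "even (a + b)")
    case True
    then have "proper_colouring V E 2 (\<lambda>x. (x div d) mod 2)"
      unfolding VV EE using bip_col[OF d0] odds by blast
    then show ?thesis unfolding has_odd_hole_def using odd_hole_no_2col by blast
  next
    case False
    then have "a = 1 \<and> b = 2" using that ab12 by blast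
    then have "E = toeplitz_adj n {d, d*2}" unfolding EE by simp
    then show ?thesis unfolding has_odd_hole_def using no_hole_12[OF d0] by blast
  qed
  have B: "has_odd_hole V E" if "\<not> ?P"
    unfolding VV EE
    using hole_exists[OF d0 cop a1 ab] that assms(3) t1 t2 by (simp add: add_mult_distrib2)
  have C: "perfect V E" if ?P
  proof (cases "even (a + b)")
    case True
    then show ?thesis unfolding VV EE using perfect_bip[OF d0] odds by blast
  next
    case False
    then have "a = 1 \<and> b = 2" using that ab12 by blast
    then have "E = toeplitz_adj n {d, d*2}" unfolding EE by simp
    then show ?thesis unfolding VV using perfect_12[OF d0] by simp
  qed
  have D: "weakly_perfect V E" if "perfect V E"
    using that unfolding perfect_def weakly_perfect_def by blast
  have Ee: "\<not> weakly_perfect V E" if np: "\<not> ?P"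
  proof -
    have "t2 \<noteq> 2 * t1"
    proof
      assume "t2 = 2 * t1"
      then have "b = 2 * a" using t1 t2 d0 by simp
      then have "a = 1" using cop by simp
      then show False using np \<open>b = 2 * a\<close> by simp
    qed
    then have "clique_number V E \<le> 2" unfolding VV E_def using omega_le2 assms(1,2) by blast
    moreover have "3 \<le> chromatic_number V E" using chi_ge3[of V E] B[OF np] irr VV by simp
    ultimately show ?thesis unfolding weakly_perfect_def by simp
  qed
  show ?thesis unfolding sdiv using A B C D Ee by blast
qed

end
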